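(* Let $G=(V,E)$ be a finite undirected graph with vertex set $V=\{1,\dots,N\}$, and let $\mathbf{c}=\{\mathbf{c}_1,\dots,\mathbf{c}_K\}$ be a partition of $V$ into $K$ nonempty blocks. Then the number of spanning trees $\mathcal{T}$ of $G$ that are compatible with $\mathbf{c}$ satisfies $$\log\bigl(|\{\mathcal{T}\in\mathcal{T}_G : \mathbf{c}\prec\mathcal{T}\}|\bigr)=\sum_{k=1}^K\log\bigl(|\mathcal{T}_{G[\mathbf{c}_k]}|\bigr)+\log\bigl(|\mathcal{T}_{G\diamond\mathbf{c}}|\bigr),$$ with the convention $\log 0=-\infty$.
   Context: For a (multi)graph $H$, $\mathcal{T}_H$ denotes the set of spanning trees of $H$ (connected acyclic subgraphs containing all vertices of $H$); in a multigraph, parallel edges are distinct, so spanning trees using different parallel copies are counted separately. For a tree $\mathcal{T}$ on $V$, $\mathbf{c}\prec\mathcal{T}$ means that every block $\mathbf{c}_k$ induces a connected subgraph of $\mathcal{T}$. $G[\mathbf{c}_k]$ is the subgraph of $G$ induced by $\mathbf{c}_k$ (vertex set $\mathbf{c}_k$, edges of $G$ with both endpoints in $\mathbf{c}_k$). For $g\neq h$, the cutset is $\mathrm{cutset}(G,\mathbf{c}_g,\mathbf{c}_h)=\{(u,v)\in E: u\in\mathbf{c}_g, v\in\mathbf{c}_h\}$. The aggregate multigraph $G\diamond\mathbf{c}$ has vertex set $\{1,\dots,K\}$ and, for each pair $g\neq h$, exactly $|\mathrm{cutset}(G,\mathbf{c}_g,\mathbf{c}_h)|$ parallel edges between $g$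 and $h$ (one for each edge of that cutset). *)

theory Defs
  imports "HOL-Library.Extended_Real"
begin

text \<open>A (multi)graph is given by a vertex set W, an edge set (of abstract edge
  identities, so parallel edges are distinct), and an endpoint map ends
  sending each edge to the 2-element set of its endpoints.\<close>

definition mg_adj :: "'v set \<Rightarrow> ('e \<Rightarrow> 'v set) \<Rightarrow> 'e set \<Rightarrow> 'v \<Rightarrow> 'v \<Rightarrow> bool" where
  "mg_adj W ends F x y \<longleftrightarrow> x \<in> W \<and> y \<in> W \<and> (\<exists>e\<in>F. ends e = {x, y})"

definition mg_connected :: "'v set \<Rightarrow> ('e \<Rightarrow> 'v set) \<Rightarrow> 'e set \<Rightarrow> bool" where
  "mg_connected W ends F \<longleftrightarrow> (\<forall>u\<in>W. \<forall>v\<in>W. (mg_adj W ends F)\<^sup>*\<^sup>* u v)"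

definition mg_has_cycle :: "('e \<Rightarrow> 'v set) \<Rightarrow> 'e set \<Rightarrow> bool" where
  "mg_has_cycle ends F \<longleftrightarrow> (\<exists>vs es. length es \<ge> 1 \<and> length vs = length es + 1 \<and>
      distinct es \<and> set es \<subseteq> F \<and> hd vs = last vs \<and> distinct (tl vs) \<and>
      (\<forall>i < length es. ends (es ! i) = {vs ! i, vs ! Suc i}))"

definition spanning_trees :: "'v set \<Rightarrow> 'e set \<Rightarrow> ('e \<Rightarrow> 'v set) \<Rightarrow> 'e set set" where
  "spanning_trees W Ed ends = {F. F \<subseteq> Ed \<and> mg_connected W ends F \<and> \<not> mg_has_cycle ends F}"

definition simple_graph :: "nat \<Rightarrow> nat set set \<Rightarrow> bool" where
  "simple_graph N E \<longleftrightarrow> (\<forall>e\<in>E. card e = 2 \<and> e \<subseteq> {1..N})"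

definition is_partition :: "nat set \<Rightarrow> nat \<Rightarrow> (nat \<Rightarrow> nat set) \<Rightarrow> bool" where
  "is_partition V K c \<longleftrightarrow> (\<forall>k\<in>{1..K}. c k \<noteq> {}) \<and>
     (\<forall>g\<in>{1..K}. \<forall>h\<in>{1..K}. g \<noteq> h \<longrightarrow> c g \<inter> c h = {}) \<and>
     (\<Union>k\<in>{1..K}. c k) = V"

definition compatible :: "nat \<Rightarrow> (nat \<Rightarrow> nat set) \<Rightarrow> nat set set \<Rightarrow> bool" where
  "compatible K c T \<longleftrightarrow> (\<forall>k\<in>{1..K}. mg_connected (c k) id {e\<in>T. e \<subseteq> c k})"

definition induced_edges :: "nat set set \<Rightarrow> nat set \<Rightarrow> nat set set" where
  "induced_edges E S = {e\<in>E. e \<subseteq> S}"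

text \<open>Aggregate multigraph G \<diamond> c: vertices 1..K, one edge for each edge of G
  joining two different blocks; that edge joins the indices of those blocks.\<close>
definition agg_ends :: "nat \<Rightarrow> (nat \<Rightarrow> nat set) \<Rightarrow> nat set \<Rightarrow> nat set" where
  "agg_ends K c e = {k\<in>{1..K}. e \<inter> c k \<noteq> {}}"

definition agg_edges :: "nat set set \<Rightarrow> nat \<Rightarrow> (nat \<Rightarrow> nat set) \<Rightarrow> nat set set" where
  "agg_edges E K c = {e\<in>E. \<exists>g\<in>{1..K}. \<exists>h\<in>{1..K}. g \<noteq> h \<and>
      (\<exists>u\<in>c g. \<exists>v\<in>c h. e = {u, v})}"

definition elog :: "nat \<Rightarrow> ereal" where
  "elog n = (if n = 0 then -\<infinity> else ereal (ln (real n)))"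

end

theory Submission
  imports Defs "HOL-Library.FuncSet"
begin


definition adjE :: "('e \<Rightarrow> 'v set) \<Rightarrow> 'e set \<Rightarrow> 'v \<Rightarrow> 'v \<Rightarrow> bool" where
  "adjE ends F x y \<longleftrightarrow> (\<exists>e\<in>F. ends e = {x, y})"

lemma adjE_sym: "adjE ends F x y \<Longrightarrow> adjE ends F y x"
  unfolding adjE_def by (simp add: insert_commute)

lemma adjE_rtr_sym: "(adjE ends F)\<^sup>*\<^sup>* x y \<Longrightarrow> (adjE ends F)\<^sup>*\<^sup>* y x"
proof (induction rule: rtranclp_induct)
  case base then show ?case by simp
next
  case (step y z)
  show ?case by (rule converse_rtranclp_into_rtranclp[OF adjE_sym[OF step(2)] step(3)])
qed

lemma adjE_mono:
  assumes "F \<subseteq> F'" "(adjE ends F)\<^sup>*\<^sup>* x y"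
  shows "(adjE ends F')\<^sup>*\<^sup>* x y"
proof -
  have *: "\<And>a b. adjE ends F a b \<longrightarrow> adjE ends F' a b" using assms(1) unfolding adjE_def by blast
  show ?thesis by (rule mono_rtranclp[THEN mp, OF * assms(2)])
qed

lemma mg_adj_to_adjE:
  assumes "(mg_adj W ends F)\<^sup>*\<^sup>* x y"
  shows "(adjE ends F)\<^sup>*\<^sup>* x y"
proof -
  have *: "\<And>a b. mg_adj W ends F a b \<longrightarrow> adjE ends F a b" unfolding adjE_def mg_adj_def by blast
  show ?thesis by (rule mono_rtranclp[THEN mp, OF * assms])
qed

lemma adjE_to_mg_adj:
  assumes "(adjE ends F)\<^sup>*\<^sup>* x y" "\<forall>e\<in>F. ends e \<subseteq> W"
  shows "(mg_adj W ends F)\<^sup>*\<^sup>* x y"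
  using assms(1)
proof (induction rule: rtranclp_induct)
  case base then show ?case by simp
next
  case (step y z)
  then have "mg_adj W ends F y z" using assms(2) unfolding adjE_def mg_adj_def by blast
  then show ?case using step by (meson rtranclp.rtrancl_into_rtrancl)
qed

lemma path_idx:
  assumes "\<forall>i. lo \<le> i \<longrightarrow> i < hi \<longrightarrow> R (xs!i) (xs!Suc i)" "lo \<le> l" "l \<le> hi"
  shows "R\<^sup>*\<^sup>* (xs!lo) (xs!l)"
  using assms(2,3)
proof (induction l)
  case 0 then show ?case by simp
next
  case (Suc l)
  show ?case
  proof (cases "lo = Suc l")
    case True then show ?thesis by simp
  next
    case False
    then have "lo \<le> l" using Suc by simp
    then have "R\<^sup>*\<^sup>* (xs!lo) (xs!l)" using Suc by simp
    moreover have "R (xs!l) (xs!Suc l)" using assms(1) Suc \<open>lo \<le> l\<close> by simp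
    ultimately show ?thesis by (meson rtranclp.rtrancl_into_rtrancl)
  qed
qed

lemma distinct_path:
  assumes "R\<^sup>*\<^sup>* a b"
  shows "\<exists>qs. distinct qs \<and> qs \<noteq> [] \<and> qs!0 = a \<and> last qs = b \<and>
     (\<forall>i. Suc i < length qs \<longrightarrow> R (qs!i) (qs!Suc i))"
  using assms
proof (induction rule: rtranclp_induct)
  case base
  then show ?case by (intro exI[of _ "[a]"]) simp
next
  case (step y z)
  then obtain qs where qs: "distinct qs" "qs \<noteq> []" "qs!0 = a" "last qs = y"
     "\<forall>i. Suc i < length qs \<longrightarrow> R (qs!i) (qs!Suc i)" by blast
  show ?case
  proof (cases "z \<in> set qs")
    case True
    then obtain j where j: "j < length qs" "qs!j = z" by (meson in_set_conv_nth)
    let ?qs = "take (Suc j) qs"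
    have "last ?qs = z" using j by (simp add: take_Suc_conv_app_nth)
    moreover have "?qs!0 = a" using qs j by simp
    moreover have "\<forall>i. Suc i < length ?qs \<longrightarrow> R (?qs!i) (?qs!Suc i)" using qs(5) j by simp
    ultimately show ?thesis using qs j by (intro exI[of _ ?qs]) simp
  next
    case False
    let ?qs = "qs @ [z]"
    have "\<forall>i. Suc i < length ?qs \<longrightarrow> R (?qs!i) (?qs!Suc i)"
    proof (intro allI impI)
      fix i assume i: "Suc i < length ?qs"
      show "R (?qs!i) (?qs!Suc i)"
      proof (cases "Suc i < length qs")
        case True then show ?thesis using qs(5) by (simp add: nth_append)
      next
        case False
        then have "i = length qs - 1" using i by simp
        then have "?qs!i = y" "?qs!Suc i = z" using qs(2,4) False i
          by (auto simp: nth_append last_conv_nth)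
        then show ?thesis using step by simp
      qed
    qed
    then show ?thesis using qs False by (intro exI[of _ ?qs]) (simp add: nth_append)
  qed
qed

lemma cycle_imp:
  assumes "mg_has_cycle ends F" "\<forall>e\<in>F. \<forall>a. ends e \<noteq> {a}"
  shows "\<exists>e\<in>F. \<exists>a b. ends e = {a, b} \<and> a \<noteq> b \<and> (adjE ends (F - {e}))\<^sup>*\<^sup>* a b"
proof -
  obtain vs es where c: "length es \<ge> 1" "length vs = length es + 1"
      "distinct es" "set es \<subseteq> F" "hd vs = last vs" "distinct (tl vs)"
      "\<forall>i < length es. ends (es ! i) = {vs ! i, vs ! Suc i}"
    using assms(1) unfolding mg_has_cycle_def by blast
  let ?n = "length es"
  have e0: "es!0 \<in> F" by (metis c(1) c(4) less_le_trans nth_mem subsetD zero_less_one)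
  have ends0: "ends (es!0) = {vs!1, vs!0}" using c(1,7) by (metis One_nat_def insert_commute less_le_trans zero_less_one)
  have ne: "vs!1 \<noteq> vs!0" using ends0 assms(2) e0 by fastforce
  have "\<forall>i. 1 \<le> i \<longrightarrow> i < ?n \<longrightarrow> adjE ends (F - {es!0}) (vs!i) (vs!Suc i)"
  proof (intro allI impI)
    fix i assume i: "1 \<le> i" "i < ?n"
    have "es!i \<in> F" using c(4) i by auto
    moreover have "es!i \<noteq> es!0" using nth_eq_iff_index_eq[OF c(3), of i 0] i by (cases es) auto
    ultimately show "adjE ends (F - {es!0}) (vs!i) (vs!Suc i)"
      unfolding adjE_def using c(7) i by blast
  qed
  then have "(adjE ends (F - {es!0}))\<^sup>*\<^sup>* (vs!1) (vs!?n)"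
    using path_idx[of 1 ?n "adjE ends (F - {es!0})" vs ?n] c(1) by simp
  moreover have "vs!?n = vs!0"
    using c(1,2,5) by (metis add_diff_cancel_right' hd_conv_nth last_conv_nth list.size(3) not_one_le_zero zero_eq_add_iff_both_eq_0)
  ultimately show ?thesis using e0 ends0 ne by metis
qed

lemma imp_cycle:
  assumes "e \<in> F" "ends e = {a, b}" "a \<noteq> b" "(adjE ends (F - {e}))\<^sup>*\<^sup>* a b"
  shows "mg_has_cycle ends F"
proof -
  obtain qs where q: "distinct qs" "qs \<noteq> []" "qs!0 = a" "last qs = b"
     "\<forall>i. Suc i < length qs \<longrightarrow> adjE ends (F - {e}) (qs!i) (qs!Suc i)"
    using distinct_path[OF assms(4)] by blast
  define m where "m = length qs - 1"
  have lq: "length qs = Suc m" using q(2) m_def by simp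
  have m0: "m \<ge> 1"
  proof (rule ccontr)
    assume "\<not> 1 \<le> m"
    then have "m = 0" by simp
    then have "last qs = qs!0" using last_conv_nth[OF q(2)] lq by simp
    then show False using q(3,4) assms(3) by simp
  qed
  define fs where "fs = map (\<lambda>i. SOME f. f \<in> F - {e} \<and> ends f = {qs!i, qs!Suc i}) [0..<m]"
  have lfs: "length fs = m" by (simp add: fs_def)
  have fsi: "fs!i \<in> F - {e} \<and> ends (fs!i) = {qs!i, qs!Suc i}" if "i < m" for i
  proof -
    have "\<exists>f. f \<in> F - {e} \<and> ends f = {qs!i, qs!Suc i}" using q(5) that lq unfolding adjE_def by auto
    from someI_ex[OF this] show ?thesis unfolding fs_def using that by simp
  qed
  have dfs: "distinct fs"
  proof (subst distinct_conv_nth, intro allI impI)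
    fix i j assume ij: "i < length fs" "j < length fs" "i \<noteq> j"
    show "fs!i \<noteq> fs!j"
    proof
      assume "fs!i = fs!j"
      then have "{qs!i, qs!Suc i} = {qs!j, qs!Suc j}" using fsi ij lfs by metis
      then have "(qs!i = qs!j \<and> qs!Suc i = qs!Suc j) \<or> (qs!i = qs!Suc j \<and> qs!Suc i = qs!j)"
        by (simp add: doubleton_eq_iff)
      then show False using q(1) ij lfs lq by (auto simp: nth_eq_iff_index_eq)
    qed
  qed
  have enf: "e \<notin> set fs"
  proof
    assume "e \<in> set fs"
    then obtain i where "i < m" "fs!i = e" using lfs by (auto simp: in_set_conv_nth)
    then show False using fsi by blast
  qed
  have fsF: "set fs \<subseteq> F"
  proof
    fix f assume "f \<in> set fs"
    then obtain i where "i < m" "fs!i = f" using lfs by (auto simp: in_set_conv_nth)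
    then show "f \<in> F" using fsi by blast
  qed
  let ?vs = "b # qs" and ?es = "e # fs"
  have c1: "length ?es \<ge> 1" by simp
  have c2: "length ?vs = length ?es + 1" using lfs lq by simp
  have c3: "distinct ?es" using dfs enf by simp
  have c4: "set ?es \<subseteq> F" using fsF assms(1) by simp
  have c5: "hd ?vs = last ?vs" using q(2,4) by simp
  have c6: "distinct (tl ?vs)" using q(1) by simp
  have c7: "\<forall>i < length ?es. ends (?es ! i) = {?vs ! i, ?vs ! Suc i}"
  proof (intro allI impI)
    fix i assume i: "i < length ?es"
    show "ends (?es ! i) = {?vs ! i, ?vs ! Suc i}"
    proof (cases i)
      case 0
      then show ?thesis using assms(2) q(3) by (simp add: insert_commute)
    next
      case (Suc i')
      then have "i' < m" using i lfs by simp
      then show ?thesis using fsi[of i'] Suc by simp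
    qed
  qed
  show ?thesis unfolding mg_has_cycle_def
    apply (rule exI[of _ ?vs])
    apply (rule exI[of _ ?es])
    using c1 c2 c3 c4 c5 c6 c7 by blast
qed

lemma acyclic_subset: "F' \<subseteq> F \<Longrightarrow> \<not> mg_has_cycle ends F \<Longrightarrow> \<not> mg_has_cycle ends F'"
  unfolding mg_has_cycle_def by blast



locale PG =
  fixes N K :: nat and E :: "nat set set" and c :: "nat \<Rightarrow> nat set"
  assumes sg: "simple_graph N E"
    and part: "is_partition {1..N} K c"
begin

definition blk :: "nat \<Rightarrow> nat" where
  "blk x = (THE k. k \<in> {1..K} \<and> x \<in> c k)"

lemma disj: "g \<in> {1..K} \<Longrightarrow> h \<in> {1..K} \<Longrightarrow> x \<in> c g \<Longrightarrow> x \<in> c h \<Longrightarrow> g = h"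
  using part unfolding is_partition_def by blast

lemma c_sub: "k \<in> {1..K} \<Longrightarrow> c k \<subseteq> {1..N}"
  using part unfolding is_partition_def by blast

lemma c_ne: "k \<in> {1..K} \<Longrightarrow> c k \<noteq> {}"
  using part unfolding is_partition_def by blast

lemma blk_eq: "k \<in> {1..K} \<Longrightarrow> x \<in> c k \<Longrightarrow> blk x = k"
  unfolding blk_def using disj by blast

lemma blk: "x \<in> {1..N} \<Longrightarrow> blk x \<in> {1..K} \<and> x \<in> c (blk x)"
proof -
  assume "x \<in> {1..N}"
  then obtain k where "k \<in> {1..K}" "x \<in> c k" using part unfolding is_partition_def by blast
  then show ?thesis using blk_eq by simp
qed

lemma edgeE:
  assumes "e \<in> E"
  shows "\<exists>x y. e = {x, y} \<and> x \<noteq> y \<and> x \<in> {1..N} \<and> y \<in> {1..N}"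
proof -
  have "card e = 2" "e \<subseteq> {1..N}" using sg assms unfolding simple_graph_def by auto
  moreover from this(1) obtain x y where "e = {x, y}" "x \<noteq> y" by (auto simp: card_2_iff)
  ultimately show ?thesis by auto
qed

lemma E_sub: "e \<in> E \<Longrightarrow> e \<subseteq> {1..N}"
  using sg unfolding simple_graph_def by blast

lemma agg_ends_eq: "x \<in> {1..N} \<Longrightarrow> y \<in> {1..N} \<Longrightarrow> agg_ends K c {x, y} = {blk x, blk y}"
  unfolding agg_ends_def using blk blk_eq by auto

lemma agg_mem: "{x, y} \<in> E \<Longrightarrow> x \<in> {1..N} \<Longrightarrow> y \<in> {1..N} \<Longrightarrow>
    ({x, y} \<in> agg_edges E K c \<longleftrightarrow> blk x \<noteq> blk y)"
proof
  assume xy: "{x, y} \<in> E" "x \<in> {1..N}" "y \<in> {1..N}"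
  assume "{x, y} \<in> agg_edges E K c"
  then obtain g h u v where ghuv: "g \<in> {1..K}" "h \<in> {1..K}" "g \<noteq> h" "u \<in> c g" "v \<in> c h" "{x,y} = {u,v}"
    unfolding agg_edges_def by blast
  then have bu: "blk u = g" "blk v = h" using blk_eq by auto
  from ghuv(6) have "(x = u \<and> y = v) \<or> (x = v \<and> y = u)" by (simp add: doubleton_eq_iff)
  then show "blk x \<noteq> blk y" using bu ghuv(3) by auto
next
  assume xy: "{x, y} \<in> E" "x \<in> {1..N}" "y \<in> {1..N}" "blk x \<noteq> blk y"
  then show "{x, y} \<in> agg_edges E K c" unfolding agg_edges_def using blk by blast
qed

lemma agg_sub: "agg_edges E K c \<subseteq> E"
  unfolding agg_edges_def by blast

lemma aggE:
  assumes "e \<in> agg_edges E K c"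
  shows "\<exists>x y. e = {x, y} \<and> x \<in> {1..N} \<and> y \<in> {1..N} \<and> blk x \<noteq> blk y"
proof -
  have eE: "e \<in> E" using assms agg_sub by blast
  then obtain x y where xy: "e = {x, y}" "x \<in> {1..N}" "y \<in> {1..N}" using edgeE by blast
  then have "blk x \<noteq> blk y" using agg_mem eE assms by blast
  then show ?thesis using xy by blast
qed

lemma agg_loopless:
  assumes "e \<in> agg_edges E K c"
  shows "agg_ends K c e \<noteq> {a}"
proof -
  obtain x y where xy: "e = {x, y}" "x \<in> {1..N}" "y \<in> {1..N}" "blk x \<noteq> blk y"
    using aggE assms by blast
  then have "agg_ends K c e = {blk x, blk y}" using agg_ends_eq by simp
  then show ?thesis using xy(4) by auto
qed

lemma agg_ends_sub: "agg_ends K c e \<subseteq> {1..K}"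
  unfolding agg_ends_def by blast

lemma G_loopless:
  assumes "e \<in> E"
  shows "id e \<noteq> {a}"
proof -
  obtain x y where "e = {x, y}" "x \<noteq> y" using edgeE assms by blast
  then show ?thesis by auto
qed

lemma agg_not_in_block:
  assumes "e \<in> agg_edges E K c" "k \<in> {1..K}"
  shows "\<not> e \<subseteq> c k"
proof
  assume sub: "e \<subseteq> c k"
  obtain x y where xy: "e = {x, y}" "x \<in> {1..N}" "y \<in> {1..N}" "blk x \<noteq> blk y"
    using aggE assms by blast
  then have "x \<in> c k" "y \<in> c k" using sub by auto
  then have "blk x = k" "blk y = k" using blk_eq assms(2) by auto
  then show False using xy(4) by simp
qed

lemma edge_split:
  assumes e: "e \<in> E"
  shows "e \<in> agg_edges E K c \<or> (\<exists>k\<in>{1..K}. e \<subseteq> c k)"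
proof -
  obtain x y where xy: "e = {x, y}" "x \<in> {1..N}" "y \<in> {1..N}" using edgeE e by blast
  show ?thesis
  proof (cases "blk x = blk y")
    case True
    have "x \<in> c (blk x)" "y \<in> c (blk x)" "blk x \<in> {1..K}" using blk xy True by metis+
    then show ?thesis using xy by blast
  next
    case False then show ?thesis using agg_mem e xy by blast
  qed
qed

lemma projection:
  assumes "(adjE id S)\<^sup>*\<^sup>* x y" "S \<subseteq> E"
  shows "(adjE (agg_ends K c) (S \<inter> agg_edges E K c))\<^sup>*\<^sup>* (blk x) (blk y)"
  using assms(1)
proof (induction rule: rtranclp_induct)
  case base then show ?case by simp
next
  case (step y z)
  then obtain f where f: "f \<in> S" "f = {y, z}" unfolding adjE_def by auto
  have fE: "f \<in> E" using f(1) assms(2) by blast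
  then have "f \<subseteq> {1..N}" using E_sub by blast
  then have yz: "y \<in> {1..N}" "z \<in> {1..N}" using f(2) by auto
  show ?case
  proof (cases "blk y = blk z")
    case True then show ?thesis using step(3) by simp
  next
    case False
    then have "f \<in> agg_edges E K c" using agg_mem[of y z] fE f(2) yz by simp
    moreover have "agg_ends K c f = {blk y, blk z}" using agg_ends_eq f(2) yz by simp
    ultimately have "adjE (agg_ends K c) (S \<inter> agg_edges E K c) (blk y) (blk z)"
      unfolding adjE_def using f(1) by blast
    then show ?thesis by (rule rtranclp.rtrancl_into_rtrancl[OF step(3)])
  qed
qed

lemma lift:
  assumes S: "S \<subseteq> agg_edges E K c"
    and B: "\<forall>k\<in>{1..K}. \<forall>u\<in>c k. \<forall>v\<in>c k. (adjE id B)\<^sup>*\<^sup>* u v"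
    and p: "(adjE (agg_ends K c) S)\<^sup>*\<^sup>* g h"
  shows "\<forall>u\<in>c g. \<forall>v\<in>c h. g \<in> {1..K} \<longrightarrow> (adjE id (S \<union> B))\<^sup>*\<^sup>* u v"
  using p
proof (induction rule: rtranclp_induct)
  case base
  show ?case
  proof (intro ballI impI)
    fix u v assume "u \<in> c g" "v \<in> c g" "g \<in> {1..K}"
    then have "(adjE id B)\<^sup>*\<^sup>* u v" using B by blast
    then show "(adjE id (S \<union> B))\<^sup>*\<^sup>* u v" by (rule adjE_mono[OF Un_upper2])
  qed
next
  case (step h' h)
  obtain f where f: "f \<in> S" "agg_ends K c f = {h', h}" using step(2) unfolding adjE_def by auto
  have fA: "f \<in> agg_edges E K c" using f(1) S by blast
  obtain x y where xy: "f = {x, y}" "x \<in> {1..N}" "y \<in> {1..N}" "blk x \<noteq> blk y"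
    using aggE[OF fA] by blast
  have hK: "h \<in> {1..K}" using f(2) agg_ends_sub by blast
  have e: "{blk x, blk y} = {h', h}" using f(2) xy agg_ends_eq by simp
  have Bc: "(adjE id (S \<union> B))\<^sup>*\<^sup>* u v" if "u \<in> c h" "v \<in> c h" for u v
  proof -
    have "(adjE id B)\<^sup>*\<^sup>* u v" using B hK that by blast
    then show ?thesis by (rule adjE_mono[OF Un_upper2])
  qed
  have ed1: "adjE id (S \<union> B) x y" unfolding adjE_def using f(1) xy(1) by auto
  have ed2: "adjE id (S \<union> B) y x" using adjE_sym[OF ed1] .
  show ?case
  proof (intro ballI impI)
    fix u v assume uv: "u \<in> c g" "v \<in> c h" "g \<in> {1..K}"
    have cases: "(blk x = h' \<and> blk y = h) \<or> (blk x = h \<and> blk y = h')"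
      using e by (simp add: doubleton_eq_iff)
    show "(adjE id (S \<union> B))\<^sup>*\<^sup>* u v"
    proof (cases "blk x = h' \<and> blk y = h")
      case True
      then have xh: "x \<in> c h'" "y \<in> c h" using blk xy by metis+
      have 1: "(adjE id (S \<union> B))\<^sup>*\<^sup>* u x" using step(3) uv(1,3) xh(1) by blast
      have 2: "(adjE id (S \<union> B))\<^sup>*\<^sup>* y v" using Bc xh(2) uv(2) by blast
      show ?thesis using rtranclp_trans[OF rtranclp.rtrancl_into_rtrancl[OF 1 ed1] 2] .
    next
      case False
      then have "blk x = h" "blk y = h'" using cases by auto
      then have xh: "y \<in> c h'" "x \<in> c h" using blk xy by metis+
      have 1: "(adjE id (S \<union> B))\<^sup>*\<^sup>* u y" using step(3) uv(1,3) xh(1) by blast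
      have 2: "(adjE id (S \<union> B))\<^sup>*\<^sup>* x v" using Bc xh(2) uv(2) by blast
      show ?thesis using rtranclp_trans[OF rtranclp.rtrancl_into_rtrancl[OF 1 ed2] 2] .
    qed
  qed
qed

end


context PG
begin

abbreviation "AG \<equiv> agg_edges E K c"
abbreviation "AE \<equiv> agg_ends K c"

lemma conn_adjE:
  assumes "mg_connected W ends F" "u \<in> W" "v \<in> W"
  shows "(adjE ends F)\<^sup>*\<^sup>* u v"
proof -
  have "(mg_adj W ends F)\<^sup>*\<^sup>* u v" using assms unfolding mg_connected_def by blast
  then show ?thesis by (rule mg_adj_to_adjE)
qed

lemma agg_acyclic_lift:
  assumes T: "T \<subseteq> E" "\<not> mg_has_cycle id T"
    and blocks: "\<forall>k\<in>{1..K}. \<forall>u\<in>c k. \<forall>v\<in>c k. (adjE id {e\<in>T. e \<subseteq> c k})\<^sup>*\<^sup>* u v"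
  shows "\<not> mg_has_cycle AE (T \<inter> AG)"
proof
  assume cy: "mg_has_cycle AE (T \<inter> AG)"
  have "\<forall>e\<in>T \<inter> AG. \<forall>a. AE e \<noteq> {a}"
  proof (intro ballI allI)
    fix e a assume "e \<in> T \<inter> AG"
    then have "e \<in> AG" by simp
    then show "AE e \<noteq> {a}" by (rule agg_loopless)
  qed
  then obtain e g h where e: "e \<in> T \<inter> AG" "AE e = {g, h}" "g \<noteq> h"
    "(adjE AE (T \<inter> AG - {e}))\<^sup>*\<^sup>* g h" using cycle_imp[OF cy] by blast
  obtain x y where xy: "e = {x, y}" "x \<in> {1..N}" "y \<in> {1..N}" "blk x \<noteq> blk y"
    using aggE[of e] e(1) by blast
  have xny: "x \<noteq> y" using xy(4) by auto
  have gK: "g \<in> {1..K}" using e(2) agg_ends_sub by blast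
  define B where "B = {f\<in>T. \<exists>k\<in>{1..K}. f \<subseteq> c k}"
  have Bc: "\<forall>k\<in>{1..K}. \<forall>u\<in>c k. \<forall>v\<in>c k. (adjE id B)\<^sup>*\<^sup>* u v"
  proof (intro ballI)
    fix k u v assume kuv: "k \<in> {1..K}" "u \<in> c k" "v \<in> c k"
    have 1: "(adjE id {e\<in>T. e \<subseteq> c k})\<^sup>*\<^sup>* u v" by (rule blocks[rule_format, OF kuv])
    have 2: "{e\<in>T. e \<subseteq> c k} \<subseteq> B" unfolding B_def using kuv(1) by blast
    show "(adjE id B)\<^sup>*\<^sup>* u v" by (rule adjE_mono[OF 2 1])
  qed
  have L: "\<forall>u\<in>c g. \<forall>v\<in>c h. (adjE id ((T \<inter> AG - {e}) \<union> B))\<^sup>*\<^sup>* u v"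
    using lift[OF _ Bc e(4)] gK by (meson Diff_subset Int_lower2 subset_trans)
  have sub: "(T \<inter> AG - {e}) \<union> B \<subseteq> T - {e}"
  proof
    fix f assume f: "f \<in> (T \<inter> AG - {e}) \<union> B"
    show "f \<in> T - {e}"
    proof (cases "f \<in> B")
      case True
      then obtain k where "f \<in> T" "k \<in> {1..K}" "f \<subseteq> c k" unfolding B_def by blast
      moreover have "e \<in> AG" using e(1) by simp
      ultimately have "f \<noteq> e" using agg_not_in_block by blast
      then show ?thesis using \<open>f \<in> T\<close> by simp
    next
      case False then show ?thesis using f by simp
    qed
  qed
  have ee: "AE e = {blk x, blk y}" using agg_ends_eq xy by simp
  show False
  proof (cases "blk x = g")
    case True
    have "{blk x, blk y} = {g, h}" using ee e(2) by simp
    then have "blk y = h" using True e(3) by (auto simp: doubleton_eq_iff)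
    then have "x \<in> c g" "y \<in> c h" using True blk xy by metis+
    then have "(adjE id ((T \<inter> AG - {e}) \<union> B))\<^sup>*\<^sup>* x y" using L[rule_format] by simp
    then have "(adjE id (T - {e}))\<^sup>*\<^sup>* x y" by (rule adjE_mono[OF sub])
    then have "mg_has_cycle id T" using imp_cycle[of e T id x y] e(1) xy xny by simp
    then show False using T by simp
  next
    case False
    have "{blk x, blk y} = {g, h}" using ee e(2) by simp
    then have "blk y = g" "blk x = h" using False by (auto simp: doubleton_eq_iff)
    then have "y \<in> c g" "x \<in> c h" using blk xy by metis+
    then have "(adjE id ((T \<inter> AG - {e}) \<union> B))\<^sup>*\<^sup>* y x" using L[rule_format] by simp
    then have "(adjE id (T - {e}))\<^sup>*\<^sup>* y x" by (rule adjE_mono[OF sub])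
    then have "mg_has_cycle id T" using imp_cycle[of e T id y x] e(1) xy xny by (simp add: insert_commute)
    then show False using T by simp
  qed
qed

lemma fwd:
  assumes "T \<in> spanning_trees {1..N} E id" "compatible K c T"
  shows "(\<forall>k\<in>{1..K}. {e\<in>T. e \<subseteq> c k} \<in> spanning_trees (c k) (induced_edges E (c k)) id)
     \<and> T \<inter> AG \<in> spanning_trees {1..K} AG AE"
proof -
  have T: "T \<subseteq> E" "mg_connected {1..N} id T" "\<not> mg_has_cycle id T"
    using assms(1) unfolding spanning_trees_def by auto
  have comp: "\<forall>k\<in>{1..K}. mg_connected (c k) id {e\<in>T. e \<subseteq> c k}"
    using assms(2) unfolding compatible_def by blast
  have blocks: "\<forall>k\<in>{1..K}. \<forall>u\<in>c k. \<forall>v\<in>c k. (adjE id {e\<in>T. e \<subseteq> c k})\<^sup>*\<^sup>* u v"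
  proof (intro ballI)
    fix k u v assume kuv: "k \<in> {1..K}" "u \<in> c k" "v \<in> c k"
    have "mg_connected (c k) id {e\<in>T. e \<subseteq> c k}" using comp kuv(1) by simp
    then show "(adjE id {e\<in>T. e \<subseteq> c k})\<^sup>*\<^sup>* u v" by (rule conn_adjE[OF _ kuv(2) kuv(3)])
  qed
  have A1: "\<forall>k\<in>{1..K}. {e\<in>T. e \<subseteq> c k} \<in> spanning_trees (c k) (induced_edges E (c k)) id"
  proof
    fix k assume k: "k \<in> {1..K}"
    have "\<not> mg_has_cycle id {e\<in>T. e \<subseteq> c k}" by (rule acyclic_subset[OF _ T(3)]) blast
    then show "{e\<in>T. e \<subseteq> c k} \<in> spanning_trees (c k) (induced_edges E (c k)) id"
      unfolding spanning_trees_def induced_edges_def using comp k T(1) by blast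
  qed
  have conn: "mg_connected {1..K} AE (T \<inter> AG)"
    unfolding mg_connected_def
  proof (intro ballI)
    fix g h assume gh: "g \<in> {1..K}" "h \<in> {1..K}"
    obtain u v where uv: "u \<in> c g" "v \<in> c h" using c_ne gh by blast
    have uvN: "u \<in> {1..N}" "v \<in> {1..N}" using c_sub[OF gh(1)] c_sub[OF gh(2)] uv by blast+
    have "(adjE id T)\<^sup>*\<^sup>* u v" by (rule conn_adjE[OF T(2) uvN])
    then have "(adjE AE (T \<inter> AG))\<^sup>*\<^sup>* (blk u) (blk v)" by (rule projection[OF _ T(1)])
    moreover have "blk u = g" "blk v = h" using blk_eq uv gh by auto
    ultimately have "(adjE AE (T \<inter> AG))\<^sup>*\<^sup>* g h" by simp
    then show "(mg_adj {1..K} AE (T \<inter> AG))\<^sup>*\<^sup>* g h"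
      by (rule adjE_to_mg_adj) (use agg_ends_sub in blast)
  qed
  have "\<not> mg_has_cycle AE (T \<inter> AG)" by (rule agg_acyclic_lift[OF T(1,3) blocks])
  then show ?thesis using A1 conn unfolding spanning_trees_def by blast
qed


lemma inner_case:
  assumes T: "T \<subseteq> E" and k: "k \<in> {1..K}"
    and Tk: "\<not> mg_has_cycle id {f\<in>T. f \<subseteq> c k}"
    and Ta: "\<not> mg_has_cycle AE (T \<inter> AG)"
    and e: "e \<in> T" "e \<subseteq> c k" "e = {a, b}" "a \<noteq> b"
    and p: "(adjE id (T - {e}))\<^sup>*\<^sup>* a b"
  shows False
proof -
  obtain qs where q: "distinct qs" "qs \<noteq> []" "qs!0 = a" "last qs = b"
     "\<forall>i. Suc i < length qs \<longrightarrow> adjE id (T - {e}) (qs!i) (qs!Suc i)"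
    using distinct_path[OF p] by blast
  define m where "m = length qs - 1"
  have lq: "length qs = Suc m" using q(2) m_def by simp
  have qm: "qs!m = b" using last_conv_nth[OF q(2)] q(4) lq by simp
  have ab: "a \<in> c k" "b \<in> c k" using e by auto
  have stp: "\<exists>f. f \<in> T - {e} \<and> f = {qs!i, qs!Suc i}" if "i < m" for i
    using q(5) that lq unfolding adjE_def by auto
  show False
  proof (cases "\<forall>j<length qs. qs!j \<in> c k")
    case True
    have "\<forall>i. 0 \<le> i \<longrightarrow> i < m \<longrightarrow> adjE id ({f\<in>T. f \<subseteq> c k} - {e}) (qs!i) (qs!Suc i)"
    proof (intro allI impI)
      fix i assume i: "0 \<le> i" "i < m"
      then obtain f where f: "f \<in> T - {e}" "f = {qs!i, qs!Suc i}" using stp by blast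
      then have "f \<subseteq> c k" using True i lq by auto
      then show "adjE id ({f\<in>T. f \<subseteq> c k} - {e}) (qs!i) (qs!Suc i)"
        unfolding adjE_def using f by auto
    qed
    then have "(adjE id ({f\<in>T. f \<subseteq> c k} - {e}))\<^sup>*\<^sup>* (qs!0) (qs!m)"
      using path_idx[of 0 m _ qs m] by simp
    then have "mg_has_cycle id {f\<in>T. f \<subseteq> c k}"
      using imp_cycle[of e "{f\<in>T. f \<subseteq> c k}" id a b] e q(3) qm by simp
    then show False using Tk by simp
  next
    case False
    define j0 where "j0 = (LEAST j. j < length qs \<and> qs!j \<notin> c k)"
    have ex: "\<exists>j. j < length qs \<and> qs!j \<notin> c k" using False by auto
    have j0: "j0 < length qs" "qs!j0 \<notin> c k" using LeastI_ex[OF ex] unfolding j0_def by auto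
    have j0min: "qs!j \<in> c k" if "j < j0" for j
    proof -
      have "\<not> (j < length qs \<and> qs!j \<notin> c k)"
        using not_less_Least[of j "\<lambda>j. j < length qs \<and> qs!j \<notin> c k"] that unfolding j0_def by blast
      then show ?thesis using that j0(1) by auto
    qed
    have "j0 \<noteq> 0"
    proof
      assume "j0 = 0"
      then show False using j0(2) q(3) ab by simp
    qed
    then obtain i where i: "j0 = Suc i" by (cases j0) auto
    have im: "i < m" using i j0 lq by simp
    have qi: "qs!i \<in> c k" "qs!Suc i \<notin> c k" using j0min i j0 by auto
    obtain f where f: "f \<in> T - {e}" "f = {qs!i, qs!Suc i}" using stp im by blast
    have fV: "f \<subseteq> {1..N}" using f T E_sub by blast
    then have qV: "qs!i \<in> {1..N}" "qs!Suc i \<in> {1..N}" using f by auto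
    have bi: "blk (qs!i) = k" using blk_eq k qi by simp
    have bsi: "blk (qs!Suc i) \<noteq> k"
    proof
      assume "blk (qs!Suc i) = k"
      then have "qs!Suc i \<in> c k" using blk[OF qV(2)] by simp
      then show False using qi by simp
    qed
    have fE: "f \<in> E" using f T by blast
    have fA: "f \<in> AG" using agg_mem[of "qs!i" "qs!Suc i"] fE f(2) qV bi bsi by simp
    have fAE: "AE f = {k, blk (qs!Suc i)}" using agg_ends_eq qV f bi by simp
    have "\<forall>l. Suc i \<le> l \<longrightarrow> l < m \<longrightarrow> adjE id (T - {e} - {f}) (qs!l) (qs!Suc l)"
    proof (intro allI impI)
      fix l assume l: "Suc i \<le> l" "l < m"
      then obtain g where g: "g \<in> T - {e}" "g = {qs!l, qs!Suc l}" using stp by blast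
      have "qs!i \<noteq> qs!l" "qs!i \<noteq> qs!Suc l"
        using q(1) l lq nth_eq_iff_index_eq[OF q(1)] by auto
      then have "g \<noteq> f" using f g by auto
      then show "adjE id (T - {e} - {f}) (qs!l) (qs!Suc l)" unfolding adjE_def using g by auto
    qed
    then have "(adjE id (T - {e} - {f}))\<^sup>*\<^sup>* (qs!Suc i) (qs!m)"
      using path_idx[of "Suc i" m _ qs m] im by simp
    then have "(adjE AE ((T - {e} - {f}) \<inter> AG))\<^sup>*\<^sup>* (blk (qs!Suc i)) (blk (qs!m))"
      by (rule projection) (use T in blast)
    then have "(adjE AE ((T - {e} - {f}) \<inter> AG))\<^sup>*\<^sup>* (blk (qs!Suc i)) (blk b)"
      using qm by simp
    then have "(adjE AE (T \<inter> AG - {f}))\<^sup>*\<^sup>* (blk (qs!Suc i)) k"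
    proof -
      have "blk b = k" using blk_eq k ab by simp
      moreover have "(T - {e} - {f}) \<inter> AG \<subseteq> T \<inter> AG - {f}" by blast
      ultimately show ?thesis using adjE_mono \<open>(adjE AE ((T - {e} - {f}) \<inter> AG))\<^sup>*\<^sup>* (blk (qs!Suc i)) (blk b)\<close> by metis
    qed
    then have "(adjE AE (T \<inter> AG - {f}))\<^sup>*\<^sup>* k (blk (qs!Suc i))" by (rule adjE_rtr_sym)
    then have "mg_has_cycle AE (T \<inter> AG)"
      using imp_cycle[of f "T \<inter> AG" AE k "blk (qs!Suc i)"] f fA fAE bsi by auto
    then show False using Ta by simp
  qed
qed


lemma bwd:
  assumes tau: "\<forall>k\<in>{1..K}. \<tau> k \<in> spanning_trees (c k) (induced_edges E (c k)) id"
    and Ta: "Ta \<in> spanning_trees {1..K} AG AE"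
  defines "T \<equiv> (\<Union>k\<in>{1..K}. \<tau> k) \<union> Ta"
  shows "T \<in> spanning_trees {1..N} E id \<and> compatible K c T \<and>
     (\<forall>k\<in>{1..K}. {e\<in>T. e \<subseteq> c k} = \<tau> k) \<and> T \<inter> AG = Ta"
proof -
  have tk: "\<And>k. k \<in> {1..K} \<Longrightarrow> \<tau> k \<subseteq> E \<and> (\<forall>f\<in>\<tau> k. f \<subseteq> c k) \<and>
      mg_connected (c k) id (\<tau> k) \<and> \<not> mg_has_cycle id (\<tau> k)"
  proof -
    fix k assume k: "k \<in> {1..K}"
    have "\<tau> k \<in> spanning_trees (c k) (induced_edges E (c k)) id" using tau k by blast
    then have 1: "\<tau> k \<subseteq> induced_edges E (c k)" "mg_connected (c k) id (\<tau> k)"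
        "\<not> mg_has_cycle id (\<tau> k)" unfolding spanning_trees_def by auto
    have 2: "\<tau> k \<subseteq> E" "\<forall>f\<in>\<tau> k. f \<subseteq> c k" using 1(1) unfolding induced_edges_def by auto
    show "\<tau> k \<subseteq> E \<and> (\<forall>f\<in>\<tau> k. f \<subseteq> c k) \<and>
      mg_connected (c k) id (\<tau> k) \<and> \<not> mg_has_cycle id (\<tau> k)" using 1 2 by simp
  qed
  have ta: "Ta \<subseteq> AG" "mg_connected {1..K} AE Ta" "\<not> mg_has_cycle AE Ta"
    using Ta unfolding spanning_trees_def by auto
  have TE: "T \<subseteq> E"
  proof
    fix f assume "f \<in> T"
    then consider (a) "f \<in> Ta" | (b) k where "k \<in> {1..K}" "f \<in> \<tau> k" unfolding T_def by blast
    then show "f \<in> E"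
    proof cases
      case a then show ?thesis using ta(1) agg_sub by blast
    next
      case b then show ?thesis using tk[OF b(1)] by blast
    qed
  qed
  have blockeq: "\<forall>k\<in>{1..K}. {e\<in>T. e \<subseteq> c k} = \<tau> k"
  proof
    fix k assume k: "k \<in> {1..K}"
    show "{e\<in>T. e \<subseteq> c k} = \<tau> k"
    proof
      have "\<forall>f\<in>\<tau> k. f \<subseteq> c k" using tk[OF k] by simp
      then show "\<tau> k \<subseteq> {e\<in>T. e \<subseteq> c k}" using k unfolding T_def by blast
    next
      show "{e\<in>T. e \<subseteq> c k} \<subseteq> \<tau> k"
      proof
        fix e assume e: "e \<in> {e\<in>T. e \<subseteq> c k}"
        have "e \<notin> Ta"
        proof
          assume "e \<in> Ta"
          then have "e \<in> AG" using ta(1) by blast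
          then show False using agg_not_in_block[OF _ k] e by blast
        qed
        then obtain j where j: "j \<in> {1..K}" "e \<in> \<tau> j" using e unfolding T_def by blast
        obtain x y where xy: "e = {x, y}" using edgeE TE e by blast
        have "e \<subseteq> c j" using tk[OF j(1)] j(2) by blast
        then have "x \<in> c j" "x \<in> c k" using xy e by auto
        then have "j = k" using disj j k by blast
        then show "e \<in> \<tau> k" using j by simp
      qed
    qed
  qed
  have aggeq: "T \<inter> AG = Ta"
  proof
    show "Ta \<subseteq> T \<inter> AG" unfolding T_def using ta(1) by blast
  next
    show "T \<inter> AG \<subseteq> Ta"
    proof
      fix f assume f: "f \<in> T \<inter> AG"
      show "f \<in> Ta"
      proof (rule ccontr)
        assume "f \<notin> Ta"
        then obtain k where k: "k \<in> {1..K}" "f \<in> \<tau> k" using f unfolding T_def by blast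
        then have "f \<subseteq> c k" using tk[OF k(1)] by blast
        then show False using agg_not_in_block[OF _ k(1)] f by blast
      qed
    qed
  qed
  have Bc: "\<forall>k\<in>{1..K}. \<forall>u\<in>c k. \<forall>v\<in>c k. (adjE id (\<Union>k\<in>{1..K}. \<tau> k))\<^sup>*\<^sup>* u v"
  proof (intro ballI)
    fix k u v assume kuv: "k \<in> {1..K}" "u \<in> c k" "v \<in> c k"
    have "mg_connected (c k) id (\<tau> k)" using tk kuv(1) by simp
    then have 1: "(adjE id (\<tau> k))\<^sup>*\<^sup>* u v" by (rule conn_adjE[OF _ kuv(2) kuv(3)])
    have 2: "\<tau> k \<subseteq> (\<Union>k\<in>{1..K}. \<tau> k)" using kuv(1) by blast
    show "(adjE id (\<Union>k\<in>{1..K}. \<tau> k))\<^sup>*\<^sup>* u v" by (rule adjE_mono[OF 2 1])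
  qed
  have conn: "mg_connected {1..N} id T"
    unfolding mg_connected_def
  proof (intro ballI)
    fix u v assume uv: "u \<in> {1..N}" "v \<in> {1..N}"
    have bu: "blk u \<in> {1..K}" "u \<in> c (blk u)" using blk uv(1) by auto
    have bv: "blk v \<in> {1..K}" "v \<in> c (blk v)" using blk uv(2) by auto
    have "(adjE AE Ta)\<^sup>*\<^sup>* (blk u) (blk v)" using conn_adjE[OF ta(2) bu(1) bv(1)] .
    from lift[OF ta(1) Bc this] have "(adjE id (Ta \<union> (\<Union>k\<in>{1..K}. \<tau> k)))\<^sup>*\<^sup>* u v"
      using bu bv by simp
    then have "(adjE id T)\<^sup>*\<^sup>* u v" unfolding T_def by (simp add: Un_commute)
    then show "(mg_adj {1..N} id T)\<^sup>*\<^sup>* u v"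
      by (rule adjE_to_mg_adj) (use TE E_sub in auto)
  qed
  have compat: "compatible K c T" unfolding compatible_def
  proof
    fix k assume k: "k \<in> {1..K}"
    then have "{e\<in>T. e \<subseteq> c k} = \<tau> k" using blockeq by blast
    then show "mg_connected (c k) id {e\<in>T. e \<subseteq> c k}" using tk[OF k] by simp
  qed
  have acyc: "\<not> mg_has_cycle id T"
  proof
    assume cy: "mg_has_cycle id T"
    have "\<forall>e\<in>T. \<forall>a. id e \<noteq> {a}"
    proof (intro ballI allI)
      fix e a assume "e \<in> T"
      then have "e \<in> E" using TE by blast
      then show "id e \<noteq> {a}" by (rule G_loopless)
    qed
    then obtain e a b where e: "e \<in> T" "id e = {a, b}" "a \<noteq> b" "(adjE id (T - {e}))\<^sup>*\<^sup>* a b"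
      using cycle_imp[OF cy] by blast
    have "e \<subseteq> {1..N}" using e(1) TE E_sub by blast
    then have abV: "a \<in> {1..N}" "b \<in> {1..N}" using e(2) by auto
    show False
    proof (cases "e \<in> Ta")
      case True
      have "(adjE AE ((T - {e}) \<inter> AG))\<^sup>*\<^sup>* (blk a) (blk b)"
        by (rule projection[OF e(4)]) (use TE in blast)
      moreover have "(T - {e}) \<inter> AG = Ta - {e}" using aggeq by blast
      moreover have "AE e = {blk a, blk b}" using agg_ends_eq abV e(2) by simp
      moreover have "blk a \<noteq> blk b"
      proof -
        have "{a, b} \<in> AG" using True ta(1) e(2) by auto
        moreover have "{a, b} \<in> E" using e(1,2) TE by auto
        ultimately show ?thesis using agg_mem[of a b] abV by simp
      qed
      ultimately have "mg_has_cycle AE Ta" using imp_cycle[of e Ta AE "blk a" "blk b"] True by simp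
      then show False using ta by simp
    next
      case False
      then obtain k where k: "k \<in> {1..K}" "e \<in> \<tau> k" using e(1) unfolding T_def by blast
      have "{f\<in>T. f \<subseteq> c k} = \<tau> k" using blockeq k(1) by blast
      then have 1: "\<not> mg_has_cycle id {f\<in>T. f \<subseteq> c k}" using tk[OF k(1)] by simp
      have 2: "\<not> mg_has_cycle AE (T \<inter> AG)" using aggeq ta(3) by simp
      have 3: "e \<subseteq> c k" using tk[OF k(1)] k(2) by blast
      show False using inner_case[OF TE k(1) 1 2 e(1) 3 _ e(3)] e(2,4) by simp
    qed
  qed
  have "T \<in> spanning_trees {1..N} E id" unfolding spanning_trees_def using TE conn acyc by simp
  then show ?thesis using compat blockeq aggeq by simp
qed

lemma recon:
  assumes "T \<subseteq> E"
  shows "T = (\<Union>k\<in>{1..K}. {e\<in>T. e \<subseteq> c k}) \<union> (T \<inter> AG)"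
proof
  show "T \<subseteq> (\<Union>k\<in>{1..K}. {e\<in>T. e \<subseteq> c k}) \<union> (T \<inter> AG)"
  proof
    fix e assume e: "e \<in> T"
    then have "e \<in> E" using assms by blast
    then have "e \<in> AG \<or> (\<exists>k\<in>{1..K}. e \<subseteq> c k)" by (rule edge_split)
    then show "e \<in> (\<Union>k\<in>{1..K}. {e\<in>T. e \<subseteq> c k}) \<union> (T \<inter> AG)" using e by blast
  qed
qed blast

lemma count:
  "card {T \<in> spanning_trees {1..N} E id. compatible K c T} =
   (\<Prod>k\<in>{1..K}. card (spanning_trees (c k) (induced_edges E (c k)) id)) *
   card (spanning_trees {1..K} AG AE)"
proof -
  define A where "A = {T \<in> spanning_trees {1..N} E id. compatible K c T}"
  define B where "B = (\<Pi>\<^sub>E k\<in>{1..K}. spanning_trees (c k) (induced_edges E (c k)) id) \<times>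
      spanning_trees {1..K} AG AE"
  define \<Phi> where "\<Phi> T = (restrict (\<lambda>k. {e\<in>T. e \<subseteq> c k}) {1..K}, T \<inter> AG)" for T
  have inj: "inj_on \<Phi> A"
  proof (rule inj_onI)
    fix T1 T2 assume T: "T1 \<in> A" "T2 \<in> A" "\<Phi> T1 = \<Phi> T2"
    have E1: "T1 \<subseteq> E" using T(1) unfolding A_def spanning_trees_def by blast
    have E2: "T2 \<subseteq> E" using T(2) unfolding A_def spanning_trees_def by blast
    have r: "restrict (\<lambda>k. {e\<in>T1. e \<subseteq> c k}) {1..K} = restrict (\<lambda>k. {e\<in>T2. e \<subseteq> c k}) {1..K}"
      and a: "T1 \<inter> AG = T2 \<inter> AG" using T(3) unfolding \<Phi>_def by simp_all
    have bl: "{e\<in>T1. e \<subseteq> c k} = {e\<in>T2. e \<subseteq> c k}" if "k \<in> {1..K}" for k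
    proof -
      have "restrict (\<lambda>k. {e\<in>T1. e \<subseteq> c k}) {1..K} k = restrict (\<lambda>k. {e\<in>T2. e \<subseteq> c k}) {1..K} k"
        using r by simp
      then show ?thesis using that by simp
    qed
    have "(\<Union>k\<in>{1..K}. {e\<in>T1. e \<subseteq> c k}) = (\<Union>k\<in>{1..K}. {e\<in>T2. e \<subseteq> c k})"
      by (rule SUP_cong) (simp_all add: bl)
    then show "T1 = T2" using recon[OF E1] recon[OF E2] a by simp
  qed
  have img: "\<Phi> ` A = B"
  proof
    show "\<Phi> ` A \<subseteq> B"
    proof
      fix p assume "p \<in> \<Phi> ` A"
      then obtain T where T: "T \<in> A" "p = \<Phi> T" by blast
      have f: "(\<forall>k\<in>{1..K}. {e\<in>T. e \<subseteq> c k} \<in> spanning_trees (c k) (induced_edges E (c k)) id)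
         \<and> T \<inter> AG \<in> spanning_trees {1..K} AG AE" using fwd T(1) unfolding A_def by blast
      have "restrict (\<lambda>k. {e\<in>T. e \<subseteq> c k}) {1..K} \<in> (\<Pi>\<^sub>E k\<in>{1..K}. spanning_trees (c k) (induced_edges E (c k)) id)"
        using f by simp
      then show "p \<in> B" unfolding B_def T(2) \<Phi>_def using f by simp
    qed
  next
    show "B \<subseteq> \<Phi> ` A"
    proof
      fix p assume p: "p \<in> B"
      obtain \<tau> Ta where pt: "p = (\<tau>, Ta)" by (cases p)
      have tau: "\<tau> \<in> (\<Pi>\<^sub>E k\<in>{1..K}. spanning_trees (c k) (induced_edges E (c k)) id)"
        and Ta: "Ta \<in> spanning_trees {1..K} AG AE" using p pt unfolding B_def by auto
      have tau': "\<forall>k\<in>{1..K}. \<tau> k \<in> spanning_trees (c k) (induced_edges E (c k)) id"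
        using tau by blast
      define T where "T = (\<Union>k\<in>{1..K}. \<tau> k) \<union> Ta"
      have r: "T \<in> spanning_trees {1..N} E id \<and> compatible K c T \<and>
         (\<forall>k\<in>{1..K}. {e\<in>T. e \<subseteq> c k} = \<tau> k) \<and> T \<inter> AG = Ta"
        unfolding T_def by (rule bwd[OF tau' Ta])
      have "restrict (\<lambda>k. {e\<in>T. e \<subseteq> c k}) {1..K} = \<tau>"
      proof
        fix k
        show "restrict (\<lambda>k. {e\<in>T. e \<subseteq> c k}) {1..K} k = \<tau> k"
        proof (cases "k \<in> {1..K}")
          case True then show ?thesis using r by simp
        next
          case False
          then have 1: "\<tau> k = undefined" using tau by (simp add: PiE_def extensional_def)
          have "restrict (\<lambda>k. {e\<in>T. e \<subseteq> c k}) {1..K} k = undefined"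
            unfolding restrict_def using False by (rule if_not_P)
          then show ?thesis using 1 by simp
        qed
      qed
      then have "\<Phi> T = p" using r pt unfolding \<Phi>_def by simp
      moreover have "T \<in> A" using r unfolding A_def by simp
      ultimately show "p \<in> \<Phi> ` A" by blast
    qed
  qed
  have "card A = card (\<Phi> ` A)" using card_image[OF inj] by simp
  also have "\<dots> = card B" using img by simp
  also have "\<dots> = (\<Prod>k\<in>{1..K}. card (spanning_trees (c k) (induced_edges E (c k)) id)) *
     card (spanning_trees {1..K} AG AE)"
    unfolding B_def by (simp add: card_cartesian_product card_PiE)
  finally show ?thesis unfolding A_def .
qed

end

lemma elog_mult: "elog (a * b) = elog a + elog b"
  unfolding elog_def by (simp add: ln_mult)

lemma elog_prod: "finite S \<Longrightarrow> elog (\<Prod>k\<in>S. f k) = (\<Sum>k\<in>S. elog (f k))"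
proof (induction rule: finite_induct)
  case empty then show ?case by (simp add: elog_def)
next
  case (insert x F) then show ?case by (simp add: elog_mult)
qed

theorem proposition1:
  fixes N K :: nat and E :: "nat set set" and c :: "nat \<Rightarrow> nat set"
  assumes "simple_graph N E"
    and "is_partition {1..N} K c"
  shows "elog (card {T \<in> spanning_trees {1..N} E id. compatible K c T}) =
         (\<Sum>k\<in>{1..K}. elog (card (spanning_trees (c k) (induced_edges E (c k)) id)))
         + elog (card (spanning_trees {1..K} (agg_edges E K c) (agg_ends K c)))"
proof -
  interpret PG N K E c using assms by unfold_locales
  show ?thesis unfolding count elog_mult by (simp add: elog_prod)
qed

end
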